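(* Let $X$ be a $d$-dimensional Minkowski space and $A\subset X$ finite. For each point $\mathbf{p}\in A\cap\mathrm{FT}(A)$, $\mathbf{p}$ is a vertex of $\operatorname{conv}(A\cap\mathrm{FT}(A))$, and the set $\left\{\frac{\mathbf{q}-\mathbf{p}}{\|\mathbf{q}-\mathbf{p}\|} : \mathbf{q}\in A\cap\mathrm{FT}(A),\ \mathbf{q}\neq\mathbf{p}\right\}$ is contained in a proper exposed face of the unit ball.
   Context: A Minkowski space is a finite-dimensional real normed space $(X,\|\cdot\|)$ with unit ball $B$. A proper exposed face of $B$ is the intersection of $B$ with a supporting hyperplane of $B$. For finite $A$, $\mathrm{FT}(A)$ is the set of minimizers of $\mathbf{x}\mapsto\sum_{\mathbf{a}\in A}\|\mathbf{x}-\mathbf{a}\|$. *)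

theory Defs
  imports "HOL-Analysis.Analysis"
begin

text \<open>A Minkowski space: a finite-dimensional real vector space (modelled by a
  euclidean_space type, used only as the underlying vector space) equipped with an
  arbitrary norm N.\<close>
definition minkowski_norm :: "('a::euclidean_space \<Rightarrow> real) \<Rightarrow> bool" where
  "minkowski_norm N \<longleftrightarrow>
     (\<forall>x. N x = 0 \<longleftrightarrow> x = 0) \<and>
     (\<forall>x y. N (x + y) \<le> N x + N y) \<and>
     (\<forall>c x. N (c *\<^sub>R x) = \<bar>c\<bar> * N x)"

definition unit_ball :: "('a::euclidean_space \<Rightarrow> real) \<Rightarrow> 'a set" where
  "unit_ball N = {x. N x \<le> 1}"

definition FT :: "('a::euclidean_space \<Rightarrow> real) \<Rightarrow> 'a set \<Rightarrow> 'a set" where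
  "FT N A = {x. \<forall>y. (\<Sum>a\<in>A. N (x - a)) \<le> (\<Sum>a\<in>A. N (y - a))}"

end

theory Submission
  imports Defs
begin

lemma mn_0: "minkowski_norm N \<Longrightarrow> N 0 = 0"
  unfolding minkowski_norm_def by blast

lemma mn_scale: "minkowski_norm N \<Longrightarrow> N (c *\<^sub>R x) = \<bar>c\<bar> * N x"
  unfolding minkowski_norm_def by blast

lemma mn_tri: "minkowski_norm N \<Longrightarrow> N (x + y) \<le> N x + N y"
  unfolding minkowski_norm_def by blast

lemma mn_neg: "minkowski_norm N \<Longrightarrow> N (- x) = N x"
  using mn_scale[of N "-1" x] by simp

lemma mn_nonneg: "minkowski_norm N \<Longrightarrow> N x \<ge> 0"
proof -
  assume m: "minkowski_norm N"
  have "N (x + - x) \<le> N x + N (-x)" by (rule mn_tri[OF m])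
  thus ?thesis using mn_0[OF m] mn_neg[OF m, of x] by simp
qed

lemma mn_pos: "minkowski_norm N \<Longrightarrow> x \<noteq> 0 \<Longrightarrow> N x > 0"
  using mn_nonneg[of N x] unfolding minkowski_norm_def by force

lemma mn_commute: "minkowski_norm N \<Longrightarrow> N (x - y) = N (y - x)"
  using mn_neg[of N "x - y"] by simp

lemma mn_sum:
  assumes m: "minkowski_norm N"
  shows "N (sum f I) \<le> (\<Sum>i\<in>I. N (f i))"
proof (cases "finite I")
  case True
  then show ?thesis
  proof (induction I rule: finite_induct)
    case empty then show ?case using mn_0[OF m] by simp
  next
    case (insert x F)
    then show ?case using mn_tri[OF m, of "f x" "sum f F"] by simp
  qed
next
  case False then show ?thesis using mn_0[OF m] by simp
qed

lemma mn_convex_ball: "minkowski_norm N \<Longrightarrow> convex (unit_ball N)"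
proof -
  assume m: "minkowski_norm N"
  show ?thesis unfolding convex_def unit_ball_def
  proof (intro allI impI ballI, simp)
    fix x y :: 'a and u v :: real
    assume h: "N x \<le> 1" "N y \<le> 1" "0 \<le> u" "0 \<le> v" "u + v = 1"
    have "N (u *\<^sub>R x + v *\<^sub>R y) \<le> u * N x + v * N y"
      using mn_tri[OF m, of "u *\<^sub>R x" "v *\<^sub>R y"] mn_scale[OF m] h by simp
    also have "\<dots> \<le> u * 1 + v * 1"
      using h by (intro add_mono mult_left_mono) auto
    finally show "N (u *\<^sub>R x + v *\<^sub>R y) \<le> 1" using h by simp
  qed
qed

lemma mn_support:
  fixes N :: "'a::euclidean_space \<Rightarrow> real"
  assumes m: "minkowski_norm N" and w: "w \<noteq> 0"
  shows "\<exists>a. (\<forall>x. a \<bullet> x \<le> N x) \<and> a \<bullet> w = N w"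
proof -
  define M where "M = N w"
  have M: "M > 0" using mn_pos[OF m w] M_def by simp
  define C where "C = {x - w | x. N x < M}"
  have "convex C" unfolding convex_def C_def
  proof (intro allI impI ballI, clarsimp)
    fix x y :: 'a and u v :: real
    assume h: "N x < M" "N y < M" "0 \<le> u" "0 \<le> v" "u + v = 1"
    have "N (u *\<^sub>R x + v *\<^sub>R y) \<le> u * N x + v * N y"
      using mn_tri[OF m, of "u *\<^sub>R x" "v *\<^sub>R y"] mn_scale[OF m] h by simp
    also have "\<dots> < M"
    proof (cases "u = 0")
      case True then show ?thesis using h by simp
    next
      case False
      then have "u * N x < u * M" using h by simp
      moreover have "v * N y \<le> v * M" using h by (intro mult_left_mono) auto
      ultimately have "u * N x + v * N y < u * M + v * M" by linarith
      also have "\<dots> = M" using h by (simp add: flip: distrib_right)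
      finally show ?thesis .
    qed
    finally have "N (u *\<^sub>R x + v *\<^sub>R y) < M" .
    moreover have "u *\<^sub>R (x - w) + v *\<^sub>R (y - w) = (u *\<^sub>R x + v *\<^sub>R y) - w"
      using h by (simp add: algebra_simps flip: scaleR_add_left)
    ultimately show "\<exists>z. u *\<^sub>R (x - w) + v *\<^sub>R (y - w) = z - w \<and> N z < M" by blast
  qed
  moreover have "0 \<notin> C" unfolding C_def M_def by auto
  ultimately obtain c where c: "c \<noteq> 0" "\<forall>x\<in>C. 0 \<le> c \<bullet> x"
    using separating_hyperplane_set_0 by blast
  define d where "d = - c"
  have d0: "d \<noteq> 0" using c d_def by simp
  have dle: "d \<bullet> x \<le> d \<bullet> w" if "N x < M" for x
  proof -
    have "x - w \<in> C" using that C_def by blast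
    then have "0 \<le> c \<bullet> (x - w)" using c by blast
    then show ?thesis by (simp add: d_def inner_diff_right)
  qed
  have Nd: "N d > 0" using mn_pos[OF m d0] .
  define t where "t = M / (2 * N d)"
  have t: "t > 0" using M Nd t_def by simp
  have "N (t *\<^sub>R d) = t * N d" using mn_scale[OF m] t by simp
  also have "\<dots> = M / 2" using Nd t_def by simp
  finally have "N (t *\<^sub>R d) < M" using M by simp
  then have "d \<bullet> (t *\<^sub>R d) \<le> d \<bullet> w" by (rule dle)
  moreover have "d \<bullet> (t *\<^sub>R d) > 0" using t d0 by simp
  ultimately have dw: "d \<bullet> w > 0" by linarith
  define a where "a = (M / (d \<bullet> w)) *\<^sub>R d"
  have aw: "a \<bullet> w = N w" using dw M_def a_def by simp
  have "a \<bullet> x \<le> N x" for x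
  proof (rule ccontr)
    assume nle: "\<not> a \<bullet> x \<le> N x"
    have x0: "x \<noteq> 0" using nle mn_0[OF m] by auto
    have Nx: "N x > 0" using mn_pos[OF m x0] .
    define r where "r = N x / (a \<bullet> x)"
    have ax: "a \<bullet> x > 0" using nle Nx by linarith
    have r: "0 < r" "r < 1" using Nx ax nle unfolding r_def by (auto simp: divide_simps)
    define s where "s = (r + 1) / 2"
    have s: "0 < s" "s < 1" "r < s" using r s_def by auto
    define y where "y = (s * M / N x) *\<^sub>R x"
    have "N y = (s * M / N x) * N x" using mn_scale[OF m] s M Nx y_def by simp
    also have "\<dots> = s * M" using Nx by simp
    finally have "N y < M" using s M by simp
    then have "d \<bullet> y \<le> d \<bullet> w" by (rule dle)
    then have "(s * M / N x) * (d \<bullet> x) \<le> d \<bullet> w" by (simp add: y_def)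
    moreover have "a \<bullet> x = M * (d \<bullet> x) / (d \<bullet> w)" by (simp add: a_def)
    ultimately have "(s * (a \<bullet> x)) * (d \<bullet> w) \<le> N x * (d \<bullet> w)"
      using dw Nx M by (simp add: field_simps)
    then have "s * (a \<bullet> x) \<le> N x" using dw by simp
    moreover have "r * (a \<bullet> x) = N x" using ax r_def by simp
    moreover have "r * (a \<bullet> x) < s * (a \<bullet> x)" using s ax by simp
    ultimately show False by linarith
  qed
  then show ?thesis using aw by blast
qed

lemma key_align:
  fixes N :: "'a::euclidean_space \<Rightarrow> real"
  assumes m: "minkowski_norm N" and A: "finite A" and pA: "p \<in> A" and pF: "p \<in> FT N A"
    and T: "finite T" "T \<noteq> {}" "T \<subseteq> FT N A" "p \<notin> T"
  shows "N (\<Sum>q\<in>T. (1 / N (q - p)) *\<^sub>R (q - p)) \<ge> real (card T)"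
proof -
  define f where "f = (\<lambda>x. \<Sum>a\<in>A. N (x - a))"
  define w where "w = (\<Sum>q\<in>T. (1 / N (q - p)) *\<^sub>R (q - p))"
  have fq: "f q = f p" if "q \<in> T" for q
  proof -
    have "q \<in> FT N A" using that T by auto
    then have "f q \<le> f p" using pF unfolding FT_def f_def by blast
    moreover have "f p \<le> f q" using pF unfolding FT_def f_def by blast
    ultimately show ?thesis by simp
  qed
  have Nq: "N (q - p) > 0" if "q \<in> T" for q
    using mn_pos[OF m] that T by (metis right_minus_eq)
  define \<mu> where "\<mu> q = 1 / N (q - p)" for q
  define \<Lambda> where "\<Lambda> = sum \<mu> T"
  have \<mu>pos: "\<mu> q > 0" if "q \<in> T" for q using Nq[OF that] \<mu>_def by simp
  have \<Lambda>pos: "\<Lambda> > 0" unfolding \<Lambda>_def using T \<mu>pos by (intro sum_pos) auto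
  define lam where "lam q = \<mu> q / \<Lambda>" for q
  have lamnn: "lam q \<ge> 0" if "q \<in> T" for q using \<mu>pos[OF that] \<Lambda>pos lam_def by simp
  have lamsum: "sum lam T = 1" unfolding lam_def using \<Lambda>pos
    by (simp add: \<Lambda>_def flip: sum_divide_distrib)
  define x where "x = (\<Sum>q\<in>T. lam q *\<^sub>R q)"
  have xa: "x - a = (\<Sum>q\<in>T. lam q *\<^sub>R (q - a))" for a
  proof -
    have "(\<Sum>q\<in>T. lam q *\<^sub>R (q - a)) = x - (\<Sum>q\<in>T. lam q *\<^sub>R a)"
      by (simp add: x_def scaleR_diff_right sum_subtractf)
    also have "(\<Sum>q\<in>T. lam q *\<^sub>R a) = a" using lamsum by (simp flip: scaleR_sum_left)
    finally show ?thesis by simp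
  qed
  have Nxa: "N (x - a) \<le> (\<Sum>q\<in>T. lam q * N (q - a))" for a
  proof -
    have "N (x - a) \<le> (\<Sum>q\<in>T. N (lam q *\<^sub>R (q - a)))" unfolding xa by (rule mn_sum[OF m])
    also have "\<dots> = (\<Sum>q\<in>T. lam q * N (q - a))"
      using lamnn by (intro sum.cong) (auto simp: mn_scale[OF m])
    finally show ?thesis .
  qed
  have "x - p = (\<Sum>q\<in>T. (1 / \<Lambda>) *\<^sub>R ((1 / N (q - p)) *\<^sub>R (q - p)))"
    unfolding xa by (intro sum.cong) (auto simp: lam_def \<mu>_def)
  also have "\<dots> = (1 / \<Lambda>) *\<^sub>R w" unfolding w_def by (simp add: scaleR_sum_right)
  finally have Nxp: "N (x - p) = N w / \<Lambda>" using mn_scale[OF m] \<Lambda>pos by simp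
  have "f p \<le> f x" using pF unfolding FT_def f_def by blast
  also have "f x = N (x - p) + (\<Sum>a\<in>A - {p}. N (x - a))"
    unfolding f_def using A pA by (simp add: sum.remove)
  also have "(\<Sum>a\<in>A - {p}. N (x - a)) \<le> (\<Sum>a\<in>A - {p}. \<Sum>q\<in>T. lam q * N (q - a))"
    by (intro sum_mono Nxa)
  also have "\<dots> = (\<Sum>q\<in>T. lam q * (\<Sum>a\<in>A - {p}. N (q - a)))"
    by (simp add: sum_distrib_left sum.swap[of _ "A - {p}"])
  also have "\<dots> = (\<Sum>q\<in>T. lam q * f p - 1 / \<Lambda>)"
  proof (intro sum.cong refl)
    fix q assume q: "q \<in> T"
    have "(\<Sum>a\<in>A - {p}. N (q - a)) = f q - N (q - p)"
      unfolding f_def using A pA by (simp add: sum.remove)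
    then have "lam q * (\<Sum>a\<in>A - {p}. N (q - a)) = lam q * f p - lam q * N (q - p)"
      using fq[OF q] by (simp add: right_diff_distrib)
    also have "lam q * N (q - p) = 1 / \<Lambda>" using Nq[OF q] by (simp add: lam_def \<mu>_def)
    finally show "lam q * (\<Sum>a\<in>A - {p}. N (q - a)) = lam q * f p - 1 / \<Lambda>" .
  qed
  also have "\<dots> = f p - real (card T) / \<Lambda>"
    using lamsum by (simp add: sum_subtractf flip: sum_distrib_right)
  finally have "f p \<le> N w / \<Lambda> + f p - real (card T) / \<Lambda>" by (simp add: Nxp)
  then have "real (card T) / \<Lambda> \<le> N w / \<Lambda>" by simp
  then show ?thesis using \<Lambda>pos unfolding w_def by (simp add: divide_right_mono_neg divide_le_cancel)
qed


theorem lemma4p14: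
  fixes N :: "'a::euclidean_space \<Rightarrow> real" and A :: "'a set" and p :: 'a
  assumes "minkowski_norm N" and "finite A" and "p \<in> A \<inter> FT N A"
  shows "p extreme_point_of (convex hull (A \<inter> FT N A)) \<and>
         (\<exists>F. F exposed_face_of unit_ball N \<and> F \<noteq> {} \<and> F \<noteq> unit_ball N \<and>
              {(1 / N (q - p)) *\<^sub>R (q - p) | q. q \<in> A \<inter> FT N A \<and> q \<noteq> p} \<subseteq> F)"
proof -
  note m = assms(1)
  define T where "T = A \<inter> FT N A - {p}"
  have Tf: "finite T" using assms(2) T_def by simp
  have Nq: "N (q - p) > 0" if "q \<in> T" for q
    using mn_pos[OF m] that T_def by (metis Diff_iff right_minus_eq singletonI)
  have "\<exists>a w. (\<forall>x. a \<bullet> x \<le> N x) \<and> w \<noteq> 0 \<and> a \<bullet> w = N w \<and> (\<forall>q\<in>T. a \<bullet> (q - p) = N (q - p))"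
  proof (cases "T = {}")
    case True
    define w :: 'a where "w = (SOME i. i \<in> Basis)"
    have w: "w \<noteq> 0" unfolding w_def using SOME_Basis nonzero_Basis by metis
    obtain a where "\<forall>x. a \<bullet> x \<le> N x" "a \<bullet> w = N w" using mn_support[OF m w] by blast
    then show ?thesis using w True by blast
  next
    case False
    define u where "u q = (1 / N (q - p)) *\<^sub>R (q - p)" for q
    define w where "w = (\<Sum>q\<in>T. u q)"
    have Nu: "N (u q) = 1" if "q \<in> T" for q
      using Nq[OF that] mn_scale[OF m] u_def by simp
    have "N w \<le> (\<Sum>q\<in>T. N (u q))" unfolding w_def by (rule mn_sum[OF m])
    also have "\<dots> = real (card T)" using Nu by simp
    finally have le: "N w \<le> real (card T)" .
    have ge: "N w \<ge> real (card T)" unfolding w_def u_def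
      using key_align[OF m assms(2), of p T] assms(3) Tf False T_def by auto
    have cpos: "card T > 0" using Tf False by (simp add: card_gt_0_iff)
    have Nw: "N w = real (card T)" using le ge by simp
    then have w: "w \<noteq> 0" using cpos mn_0[OF m] by auto
    obtain a where a: "\<forall>x. a \<bullet> x \<le> N x" "a \<bullet> w = N w" using mn_support[OF m w] by blast
    have au: "a \<bullet> u q = 1" if q: "q \<in> T" for q
    proof (rule ccontr)
      assume "a \<bullet> u q \<noteq> 1"
      then have lt: "a \<bullet> u q < 1" using a(1) Nu[OF q] by (metis order_less_le)
      have "(\<Sum>q\<in>T. a \<bullet> u q) < (\<Sum>q\<in>T. 1)"
        by (rule sum_strict_mono_ex1[OF Tf]) (use a(1) Nu lt q in \<open>auto, metis\<close>)
      moreover have "(\<Sum>q\<in>T. a \<bullet> u q) = a \<bullet> w" unfolding w_def by (simp add: inner_sum_right)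
      ultimately show False using a(2) Nw by simp
    qed
    have "\<forall>q\<in>T. a \<bullet> (q - p) = N (q - p)"
    proof
      fix q assume q: "q \<in> T"
      have "q - p = N (q - p) *\<^sub>R u q" using Nq[OF q] u_def by simp
      then have "a \<bullet> (q - p) = N (q - p) * (a \<bullet> u q)" by (metis inner_scaleR_right)
      then show "a \<bullet> (q - p) = N (q - p)" using au[OF q] by simp
    qed
    then show ?thesis using a w by blast
  qed
  then obtain a w where a: "\<forall>x. a \<bullet> x \<le> N x" and w: "w \<noteq> 0" "a \<bullet> w = N w"
    and aq: "\<forall>q\<in>T. a \<bullet> (q - p) = N (q - p)" by blast
  define F where "F = unit_ball N \<inter> {x. a \<bullet> x = 1}"
  have Fexp: "F exposed_face_of unit_ball N" unfolding F_def
    by (rule exposed_face_of_Int_supporting_hyperplane_le[OF mn_convex_ball[OF m]])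
       (use a in \<open>auto simp: unit_ball_def intro: order_trans\<close>)
  have Nw: "N w > 0" using mn_pos[OF m w(1)] .
  have "(1 / N w) *\<^sub>R w \<in> F" unfolding F_def unit_ball_def
    using Nw w(2) mn_scale[OF m] by simp
  then have Fne: "F \<noteq> {}" by blast
  have "0 \<notin> F" unfolding F_def by simp
  moreover have "0 \<in> unit_ball N" unfolding unit_ball_def using mn_0[OF m] by simp
  ultimately have Fpr: "F \<noteq> unit_ball N" by blast
  have Fsub: "{(1 / N (q - p)) *\<^sub>R (q - p) | q. q \<in> A \<inter> FT N A \<and> q \<noteq> p} \<subseteq> F"
  proof clarify
    fix q assume q: "q \<in> A" "q \<in> FT N A" "q \<noteq> p"
    then have qT: "q \<in> T" using T_def by simp
    show "(1 / N (q - p)) *\<^sub>R (q - p) \<in> F"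
      unfolding F_def unit_ball_def using Nq[OF qT] aq qT mn_scale[OF m] by simp
  qed
  have "convex hull T \<subseteq> {x. a \<bullet> x > a \<bullet> p}"
  proof (rule hull_minimal)
    show "T \<subseteq> {x. a \<bullet> x > a \<bullet> p}"
    proof
      fix q assume q: "q \<in> T"
      have "a \<bullet> (q - p) > 0" using aq q Nq[OF q] by simp
      then show "q \<in> {x. a \<bullet> x > a \<bullet> p}" by (simp add: inner_diff_right)
    qed
  qed (rule convex_halfspace_gt)
  then have "p \<notin> convex hull T" by auto
  then have "p extreme_point_of (convex hull (insert p T))"
    by (rule extreme_point_of_convex_hull_insert[OF Tf])
  moreover have "insert p T = A \<inter> FT N A" using assms(3) T_def by auto
  ultimately show ?thesis using Fexp Fne Fpr Fsub by auto
qed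

end
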